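(* Let $\Lambda$ be a set and $\mathscr{G}=\hat\Lambda$ its groupoid of pairs. The following data on $\Lambda$ are equivalent (in bijective correspondence): (i) a group operation $*$ on $\Lambda$; (ii) a pointed heap structure on $\Lambda$, i.e. a heap structure together with a distinguished element $u\in\Lambda$; (iii) a pre-braiding $\sigma$ on $\mathscr{G}$ together with a distinguished vertex $u\in\Lambda$. The correspondences are: a group $(\Lambda,* )$ with unit $u$ gives the heap $\langle a,b,c\rangle=a*b^{-1}*c$ pointed at $u$; a pointed heap gives the group $a*b=\langle a,u,b\rangle$; a heap corresponds to the pre-braiding $\sigma([a,b]|[b,c])=[a,\langle a,b,c\rangle]|[\langle a,b,c\rangle,c]$. Under this correspondence, abelian groups correspond to involutive braidings, and thus to ternary operations satisfying $\langle a,\langle a,b,c\rangle,c\rangle=b$ for all $a,b,c$.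
   Context: The groupoid of pairs $\hat\Lambda$ has vertex set $\Lambda$ and one arrow $[a,b]\colon a\to b$ for each $(a,b)$, with $[a,b][b,c]=[a,c]$ and units $[a,a]$. For a groupoid $\mathscr{G}$ with multiplication $m$ and units $\mathbf{1}_\lambda$, a pre-braiding is a source/target-preserving map $\sigma\colon\mathscr{G}\otimes\mathscr{G}\to\mathscr{G}\otimes\mathscr{G}$ on composable pairs, $\sigma(x,y)=(x\rightharpoonup y,x\leftharpoonup y)$, such that for all composable $x|y|z$: $\sigma(x,\mathbf{1}_{\mathfrak{t}(x)})=(\mathbf{1}_{\mathfrak{s}(x)},x)$; $\sigma(\mathbf{1}_{\mathfrak{s}(x)},x)=(x,\mathbf{1}_{\mathfrak{t}(x)})$; $x\rightharpoonup yz=(x\rightharpoonup y)((x\leftharpoonup y)\rightharpoonup z)$, $x\leftharpoonup yz=(x\leftharpoonup y)\leftharpoonup z$; $xy\leftharpoonup z=(x\leftharpoonup(y\rightharpoonup z))(y\leftharpoonup z)$, $xy\rightharpoonup z=x\rightharpoonup(y\rightharpoonup z)$; and $m\circ\sigma=m$. A braiding is a bijective pre-braiding; involutive means $\sigma^2=\mathrm{id}$. A heap is a set with a ternary operation satisfying $\langle a,b,b\rangle=a$, $\langle a,a,b\rangle=b$, $\langle a,b,\langle c,d,e\rangle\rangle=\langle\langle a,b,c\rangle,d,e\rangle$. *)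

theory Defs
  imports "HOL-Algebra.Group"
begin

text \<open>Arrows of the groupoid of pairs on the vertex set (the type 'a) are pairs (a,b),
  standing for the arrow [a,b] from a to b. Composition is written diagrammatically:
  [a,b][b,c] = [a,c].\<close>

type_synonym 'a arr = "'a \<times> 'a"

definition pg_src :: "'a arr \<Rightarrow> 'a" where "pg_src x = fst x"
definition pg_tgt :: "'a arr \<Rightarrow> 'a" where "pg_tgt x = snd x"
definition pg_unit :: "'a \<Rightarrow> 'a arr" where "pg_unit a = (a, a)"
definition pg_composable :: "'a arr \<Rightarrow> 'a arr \<Rightarrow> bool" where
  "pg_composable x y \<longleftrightarrow> pg_tgt x = pg_src y"
definition pg_comp :: "'a arr \<Rightarrow> 'a arr \<Rightarrow> 'a arr" where
  "pg_comp x y = (pg_src x, pg_tgt y)"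

definition pg_Comp :: "('a arr \<times> 'a arr) set" where
  "pg_Comp = {(x, y). pg_composable x y}"

definition lact :: "('a arr \<times> 'a arr \<Rightarrow> 'a arr \<times> 'a arr) \<Rightarrow> 'a arr \<Rightarrow> 'a arr \<Rightarrow> 'a arr" where
  "lact \<sigma> x y = fst (\<sigma> (x, y))"
definition ract :: "('a arr \<times> 'a arr \<Rightarrow> 'a arr \<times> 'a arr) \<Rightarrow> 'a arr \<Rightarrow> 'a arr \<Rightarrow> 'a arr" where
  "ract \<sigma> x y = snd (\<sigma> (x, y))"

text \<open>Pre-braiding on the groupoid of pairs. A map defined only on composable pairs is
  represented extensionally: it takes the value undefined outside composable pairs.\<close>
definition pre_braiding :: "('a arr \<times> 'a arr \<Rightarrow> 'a arr \<times> 'a arr) \<Rightarrow> bool" where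
  "pre_braiding \<sigma> \<longleftrightarrow>
     (\<forall>p. p \<notin> pg_Comp \<longrightarrow> \<sigma> p = undefined) \<and>
     (\<forall>x y. pg_composable x y \<longrightarrow>
        \<sigma> (x, y) \<in> pg_Comp \<and> pg_src (lact \<sigma> x y) = pg_src x \<and> pg_tgt (ract \<sigma> x y) = pg_tgt y) \<and>
     (\<forall>x. \<sigma> (x, pg_unit (pg_tgt x)) = (pg_unit (pg_src x), x)) \<and>
     (\<forall>x. \<sigma> (pg_unit (pg_src x), x) = (x, pg_unit (pg_tgt x))) \<and>
     (\<forall>x y z. pg_composable x y \<and> pg_composable y z \<longrightarrow>
        lact \<sigma> x (pg_comp y z) = pg_comp (lact \<sigma> x y) (lact \<sigma> (ract \<sigma> x y) z) \<and>
        ract \<sigma> x (pg_comp y z) = ract \<sigma> (ract \<sigma> x y) z \<and>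
        ract \<sigma> (pg_comp x y) z = pg_comp (ract \<sigma> x (lact \<sigma> y z)) (ract \<sigma> y z) \<and>
        lact \<sigma> (pg_comp x y) z = lact \<sigma> x (lact \<sigma> y z)) \<and>
     (\<forall>x y. pg_composable x y \<longrightarrow> case_prod pg_comp (\<sigma> (x, y)) = pg_comp x y)"

definition braiding :: "('a arr \<times> 'a arr \<Rightarrow> 'a arr \<times> 'a arr) \<Rightarrow> bool" where
  "braiding \<sigma> \<longleftrightarrow> pre_braiding \<sigma> \<and> bij_betw \<sigma> pg_Comp pg_Comp"

definition involutive_braiding :: "('a arr \<times> 'a arr \<Rightarrow> 'a arr \<times> 'a arr) \<Rightarrow> bool" where
  "involutive_braiding \<sigma> \<longleftrightarrow> braiding \<sigma> \<and> (\<forall>p \<in> pg_Comp. \<sigma> (\<sigma> p) = p)"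

definition prebraidings :: "('a arr \<times> 'a arr \<Rightarrow> 'a arr \<times> 'a arr) set" where
  "prebraidings = {\<sigma>. pre_braiding \<sigma>}"

definition is_heap :: "('a \<Rightarrow> 'a \<Rightarrow> 'a \<Rightarrow> 'a) \<Rightarrow> bool" where
  "is_heap h \<longleftrightarrow> (\<forall>a b. h a b b = a) \<and> (\<forall>a b. h a a b = b) \<and>
     (\<forall>a b c d e. h a b (h c d e) = h (h a b c) d e)"

definition heaps :: "('a \<Rightarrow> 'a \<Rightarrow> 'a \<Rightarrow> 'a) set" where
  "heaps = {h. is_heap h}"

definition pointed_heaps :: "(('a \<Rightarrow> 'a \<Rightarrow> 'a \<Rightarrow> 'a) \<times> 'a) set" where
  "pointed_heaps = heaps \<times> UNIV"

definition groups_on_type :: "'a monoid set" where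
  "groups_on_type = {G. group G \<and> carrier G = UNIV}"

definition group_heap :: "'a monoid \<Rightarrow> 'a \<Rightarrow> 'a \<Rightarrow> 'a \<Rightarrow> 'a" where
  "group_heap G a b c = (a \<otimes>\<^bsub>G\<^esub> inv\<^bsub>G\<^esub> b) \<otimes>\<^bsub>G\<^esub> c"

definition heap_group :: "('a \<Rightarrow> 'a \<Rightarrow> 'a \<Rightarrow> 'a) \<Rightarrow> 'a \<Rightarrow> 'a monoid" where
  "heap_group h u = \<lparr>carrier = UNIV, mult = (\<lambda>a b. h a u b), one = u\<rparr>"

definition heap_pb :: "('a \<Rightarrow> 'a \<Rightarrow> 'a \<Rightarrow> 'a) \<Rightarrow> ('a arr \<times> 'a arr \<Rightarrow> 'a arr \<times> 'a arr)" where
  "heap_pb h = (\<lambda>(x, y). if pg_composable x y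
      then ((fst x, h (fst x) (snd x) (snd y)), (h (fst x) (snd x) (snd y), snd y))
      else undefined)"

definition pb_heap :: "('a arr \<times> 'a arr \<Rightarrow> 'a arr \<times> 'a arr) \<Rightarrow> 'a \<Rightarrow> 'a \<Rightarrow> 'a \<Rightarrow> 'a" where
  "pb_heap \<sigma> a b c = snd (fst (\<sigma> ((a, b), (b, c))))"

end

theory Submission
  imports Defs
begin

lemma gh_heap:
  assumes "G \<in> groups_on_type" shows "group_heap G \<in> heaps"
proof -
  interpret group G using assms by (simp add: groups_on_type_def)
  have C: "carrier G = UNIV" using assms by (simp add: groups_on_type_def)
  show ?thesis
    unfolding heaps_def is_heap_def group_heap_def
    by (simp add: C m_assoc)
qed

lemma hg_group:
  assumes "h \<in> heaps" shows "heap_group h u \<in> groups_on_type"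
proof -
  have H: "\<And>a b. h a b b = a" "\<And>a b. h a a b = b"
    "\<And>a b c d e. h a b (h c d e) = h (h a b c) d e"
    using assms by (auto simp: heaps_def is_heap_def)
  have "group (heap_group h u)"
  proof (rule groupI)
    fix x assume "x \<in> carrier (heap_group h u)"
    show "\<exists>y\<in>carrier (heap_group h u). y \<otimes>\<^bsub>heap_group h u\<^esub> x = \<one>\<^bsub>heap_group h u\<^esub>"
      by (rule bexI[where x="h u x u"]) (simp_all add: heap_group_def H(1,2) flip: H(3))
  qed (simp_all add: heap_group_def H(1,2) flip: H(3))
  then show ?thesis by (simp add: groups_on_type_def heap_group_def)
qed

lemma hg_inv:
  assumes "h \<in> heaps" shows "inv\<^bsub>heap_group h u\<^esub> b = h u b u"
proof -
  have H: "\<And>a b. h a b b = a" "\<And>a b. h a a b = b"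
    "\<And>a b c d e. h a b (h c d e) = h (h a b c) d e"
    using assms by (auto simp: heaps_def is_heap_def)
  interpret group "heap_group h u" using hg_group[OF assms] by (simp add: groups_on_type_def)
  show ?thesis
    by (rule inv_equality) (simp_all add: heap_group_def H(1,2) flip: H(3))
qed

lemma gh_hg:
  assumes "h \<in> heaps" shows "group_heap (heap_group h u) = h"
proof -
  have H: "\<And>a b. h a b b = a" "\<And>a b. h a a b = b"
    "\<And>a b c d e. h a b (h c d e) = h (h a b c) d e"
    using assms by (auto simp: heaps_def is_heap_def)
  have "group_heap (heap_group h u) a b c = h a b c" for a b c
  proof -
    have "group_heap (heap_group h u) a b c = h (h a u (h u b u)) u c"
      unfolding group_heap_def hg_inv[OF assms] by (simp add: heap_group_def)
    also have "\<dots> = h a u (h (h u b u) u c)" by (simp add: H(3))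
    also have "\<dots> = h a u (h u b (h u u c))" by (simp add: H(3))
    also have "\<dots> = h (h a u u) b c" by (simp add: H(2,3))
    also have "\<dots> = h a b c" by (simp add: H(1))
    finally show ?thesis .
  qed
  then show ?thesis by (intro ext)
qed

lemma hg_gh:
  assumes "G \<in> groups_on_type" shows "heap_group (group_heap G) \<one>\<^bsub>G\<^esub> = G"
proof -
  interpret group G using assms by (simp add: groups_on_type_def)
  have C: "carrier G = UNIV" using assms by (simp add: groups_on_type_def)
  have "mult G = (\<lambda>a b. group_heap G a \<one>\<^bsub>G\<^esub> b)"
    by (intro ext) (simp add: group_heap_def C)
  then show ?thesis
    by (simp add: heap_group_def C)
qed

lemma pb_pre:
  assumes "h \<in> heaps" shows "heap_pb h \<in> prebraidings"
proof -
  have H: "\<And>a b. h a b b = a" "\<And>a b. h a a b = b"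
    "\<And>a b c d e. h a b (h c d e) = h (h a b c) d e"
    using assms by (auto simp: heaps_def is_heap_def)
  have HA: "h (h a b c) c d = h a b d" for a b c d by (metis H(2) H(3))
  have HB: "h a b (h b c d) = h a c d" for a b c d by (simp add: H(1,3))
  show ?thesis
    unfolding prebraidings_def pre_braiding_def
    by (auto simp: heap_pb_def pg_Comp_def pg_composable_def pg_src_def pg_tgt_def
        pg_unit_def pg_comp_def lact_def ract_def H(1,2) HA HB)
qed

lemma pb_heap_pb: "pb_heap (heap_pb h) = h"
  by (intro ext) (simp add: pb_heap_def heap_pb_def pg_composable_def pg_src_def pg_tgt_def)

lemma pb_form:
  assumes "\<sigma> \<in> prebraidings" "pg_composable x y"
  shows "\<sigma> (x, y) = ((fst x, pb_heap \<sigma> (fst x) (snd x) (snd y)),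
                      (pb_heap \<sigma> (fst x) (snd x) (snd y), snd y))"
proof -
  have P: "pre_braiding \<sigma>" using assms by (simp add: prebraidings_def)
  have xy: "x = (fst x, snd x)" "y = (snd x, snd y)"
    using assms(2) by (cases x; cases y; simp add: pg_composable_def pg_src_def pg_tgt_def)+
  obtain p1 p2 q1 q2 where s: "\<sigma> (x, y) = ((p1, p2), (q1, q2))"
    by (metis prod.collapse)
  have "\<sigma> (x, y) \<in> pg_Comp" "pg_src (lact \<sigma> x y) = pg_src x" "pg_tgt (ract \<sigma> x y) = pg_tgt y"
    using P assms(2) unfolding pre_braiding_def by blast+
  then have "p2 = q1" "p1 = fst x" "q2 = snd y"
    by (auto simp: s pg_Comp_def pg_composable_def pg_src_def pg_tgt_def lact_def ract_def)
  moreover have "pb_heap \<sigma> (fst x) (snd x) (snd y) = p2"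
    using s xy by (simp add: pb_heap_def)
  ultimately show ?thesis using s by simp
qed

lemma pb_heap_heap:
  assumes "\<sigma> \<in> prebraidings" shows "pb_heap \<sigma> \<in> heaps"
proof -
  let ?h = "pb_heap \<sigma>"
  have P: "pre_braiding \<sigma>" using assms by (simp add: prebraidings_def)
  have F: "\<And>a b c. \<sigma> ((a,b),(b,c)) = ((a, ?h a b c), (?h a b c, c))"
    using pb_form[OF assms] by (simp add: pg_composable_def pg_src_def pg_tgt_def)
  have H1: "?h a b b = a" for a b
  proof -
    have "\<sigma> ((a,b), pg_unit (pg_tgt (a,b))) = (pg_unit (pg_src (a,b)), (a,b))"
      using P unfolding pre_braiding_def by blast
    then show ?thesis by (simp add: pb_heap_def pg_unit_def pg_src_def pg_tgt_def)
  qed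
  have H2: "?h a a b = b" for a b
  proof -
    have "\<sigma> (pg_unit (pg_src (a,b)), (a,b)) = ((a,b), pg_unit (pg_tgt (a,b)))"
      using P unfolding pre_braiding_def by blast
    then show ?thesis by (simp add: pb_heap_def pg_unit_def pg_src_def pg_tgt_def)
  qed
  have A: "?h a b d = ?h (?h a b c) c d" and B: "?h a c d = ?h a b (?h b c d)" for a b c d
  proof -
    have c1: "pg_composable (a,b) (b,c)" "pg_composable (b,c) (c,d)"
      by (simp_all add: pg_composable_def pg_src_def pg_tgt_def)
    have "lact \<sigma> (a,b) (pg_comp (b,c) (c,d)) =
            pg_comp (lact \<sigma> (a,b) (b,c)) (lact \<sigma> (ract \<sigma> (a,b) (b,c)) (c,d))"
      "ract \<sigma> (pg_comp (a,b) (b,c)) (c,d) =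
            pg_comp (ract \<sigma> (a,b) (lact \<sigma> (b,c) (c,d))) (ract \<sigma> (b,c) (c,d))"
      using P c1 unfolding pre_braiding_def by blast+
    then show "?h a b d = ?h (?h a b c) c d" "?h a c d = ?h a b (?h b c d)"
      by (simp_all add: lact_def ract_def F pg_comp_def pg_src_def pg_tgt_def)
  qed
  have H3: "?h a b (?h c d e) = ?h (?h a b c) d e" for a b c d e
    using A[of a b "?h c d e" c] B[of "?h a b c" d e c] by simp
  show ?thesis unfolding heaps_def is_heap_def using H1 H2 H3 by blast
qed

lemma heap_pb_pb:
  assumes "\<sigma> \<in> prebraidings" shows "heap_pb (pb_heap \<sigma>) = \<sigma>"
proof
  fix p :: "('a arr \<times> 'a arr)"
  obtain x y where p: "p = (x, y)" by (cases p)
  have P: "pre_braiding \<sigma>" using assms by (simp add: prebraidings_def)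
  show "heap_pb (pb_heap \<sigma>) p = \<sigma> p"
  proof (cases "pg_composable x y")
    case True
    then show ?thesis using pb_form[OF assms True] by (simp add: p heap_pb_def)
  next
    case False
    then have "p \<notin> pg_Comp" using p by (simp add: pg_Comp_def)
    then have "\<sigma> p = undefined" using P unfolding pre_braiding_def by blast
    then show ?thesis using False by (simp add: p heap_pb_def)
  qed
qed

lemma invol:
  assumes "h \<in> heaps"
  shows "involutive_braiding (heap_pb h) \<longleftrightarrow> (\<forall>a b c. h a (h a b c) c = b)"
proof
  assume "involutive_braiding (heap_pb h)"
  then have I: "\<forall>p\<in>pg_Comp. heap_pb h (heap_pb h p) = p" by (simp add: involutive_braiding_def)
  show "\<forall>a b c. h a (h a b c) c = b"
  proof (intro allI)
    fix a b c :: 'a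
    have "((a,b),(b,c)) \<in> pg_Comp" by (simp add: pg_Comp_def pg_composable_def pg_src_def pg_tgt_def)
    then have "heap_pb h (heap_pb h ((a,b),(b,c))) = ((a,b),(b,c))" using I by blast
    then show "h a (h a b c) c = b"
      by (simp add: heap_pb_def pg_composable_def pg_src_def pg_tgt_def)
  qed
next
  assume E: "\<forall>a b c. h a (h a b c) c = b"
  have pre: "pre_braiding (heap_pb h)" using pb_pre[OF assms] by (simp add: prebraidings_def)
  have I: "\<forall>p\<in>pg_Comp. heap_pb h (heap_pb h p) = p"
    using E by (auto simp: pg_Comp_def heap_pb_def pg_composable_def pg_src_def pg_tgt_def)
  have M: "heap_pb h ` pg_Comp \<subseteq> pg_Comp"
    by (auto simp: pg_Comp_def heap_pb_def pg_composable_def pg_src_def pg_tgt_def)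
  have "bij_betw (heap_pb h) pg_Comp pg_Comp"
    by (rule bij_betw_byWitness[where f'="heap_pb h"]) (use I M in auto)
  then show "involutive_braiding (heap_pb h)"
    using pre I by (simp add: involutive_braiding_def braiding_def)
qed

lemma commG:
  assumes "G \<in> groups_on_type"
  shows "comm_group G \<longleftrightarrow> (\<forall>a b c. group_heap G a (group_heap G a b c) c = b)"
proof -
  interpret group G using assms by (simp add: groups_on_type_def)
  have C: "carrier G = UNIV" using assms by (simp add: groups_on_type_def)
  show ?thesis
  proof
    assume "comm_group G"
    then interpret comm_group G .
    show "\<forall>a b c. group_heap G a (group_heap G a b c) c = b"
    proof (intro allI)
      fix a b c
      show "group_heap G a (group_heap G a b c) c = b"
        using m_comm[of b "inv\<^bsub>G\<^esub> a"] by (simp add: group_heap_def C inv_mult m_assoc m_lcomm) (simp add: C flip: m_assoc)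
    qed
  next
    assume E: "\<forall>a b c. group_heap G a (group_heap G a b c) c = b"
    have "x \<otimes>\<^bsub>G\<^esub> y = y \<otimes>\<^bsub>G\<^esub> x" for x y
    proof -
      have "group_heap G \<one>\<^bsub>G\<^esub> (group_heap G \<one>\<^bsub>G\<^esub> x y) y = x" using E by blast
      then have "inv\<^bsub>G\<^esub> y \<otimes>\<^bsub>G\<^esub> x \<otimes>\<^bsub>G\<^esub> y = x" by (simp add: group_heap_def C inv_mult_group m_assoc)
      then have "y \<otimes>\<^bsub>G\<^esub> (inv\<^bsub>G\<^esub> y \<otimes>\<^bsub>G\<^esub> x \<otimes>\<^bsub>G\<^esub> y) = y \<otimes>\<^bsub>G\<^esub> x" by simp
      then show ?thesis by (simp add: C m_assoc flip: m_assoc)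
    qed
    then show "comm_group G" by (intro group_comm_groupI) (simp_all add: C)
  qed
qed

lemma one_hg: "\<one>\<^bsub>heap_group h u\<^esub> = u" by (simp add: heap_group_def)

lemma b1: "bij_betw (\<lambda>G. (group_heap G, \<one>\<^bsub>G\<^esub>)) groups_on_type pointed_heaps"
    by (rule bij_betw_byWitness[where f'="\<lambda>(h,u). heap_group h u"])
       (auto simp: hg_gh gh_hg one_hg gh_heap hg_group pointed_heaps_def)
lemma b2: "bij_betw heap_pb heaps prebraidings"
    by (rule bij_betw_byWitness[where f'="pb_heap"])
       (auto simp: pb_heap_pb heap_pb_pb pb_pre pb_heap_heap)
lemma b3: "bij_betw (\<lambda>(h, u). (heap_pb h, u)) pointed_heaps (prebraidings \<times> UNIV)"
    by (rule bij_betw_byWitness[where f'="\<lambda>(s, u). (pb_heap s, u)"])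
       (auto simp: pb_heap_pb heap_pb_pb pb_pre pb_heap_heap pointed_heaps_def)
lemma b4: "bij_betw (\<lambda>G. (heap_pb (group_heap G), \<one>\<^bsub>G\<^esub>)) groups_on_type (prebraidings \<times> UNIV)"
  proof -
    have "bij_betw ((\<lambda>(h, u). (heap_pb h, u)) \<circ> (\<lambda>G. (group_heap G, \<one>\<^bsub>G\<^esub>))) groups_on_type (prebraidings \<times> UNIV)"
      using b1 b3 by (rule bij_betw_trans)
    then show ?thesis by (simp add: comp_def)
  qed

theorem corollary7p14:
  shows "(bij_betw (\<lambda>G. (group_heap G, \<one>\<^bsub>G\<^esub>)) groups_on_type pointed_heaps)
    \<and> (\<forall>(h, u) \<in> pointed_heaps. heap_group h u \<in> groups_on_type \<and>
           group_heap (heap_group h u) = h \<and> \<one>\<^bsub>heap_group h u\<^esub> = u)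
    \<and> (\<forall>G \<in> groups_on_type. heap_group (group_heap G) \<one>\<^bsub>G\<^esub> = G)
    \<and> (bij_betw heap_pb heaps prebraidings)
    \<and> (\<forall>h \<in> heaps. pb_heap (heap_pb h) = h)
    \<and> (\<forall>\<sigma> \<in> prebraidings. pb_heap \<sigma> \<in> heaps \<and> heap_pb (pb_heap \<sigma>) = \<sigma>)
    \<and> (bij_betw (\<lambda>(h, u). (heap_pb h, u)) pointed_heaps (prebraidings \<times> UNIV))
    \<and> (bij_betw (\<lambda>G. (heap_pb (group_heap G), \<one>\<^bsub>G\<^esub>)) groups_on_type (prebraidings \<times> UNIV))
    \<and> (\<forall>G \<in> groups_on_type. comm_group G \<longleftrightarrow> involutive_braiding (heap_pb (group_heap G)))
    \<and> (\<forall>G \<in> groups_on_type. comm_group G \<longleftrightarrow>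
           (\<forall>a b c. group_heap G a (group_heap G a b c) c = b))"
  using b1 b2 b3 b4 by (auto simp: hg_gh gh_hg one_hg hg_group pointed_heaps_def pb_heap_pb heap_pb_pb
        pb_heap_heap invol gh_heap commG)

end
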